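(* Consider the $2\times2$ TAHO scheme defined in the context, with $a=F'(0)>0$ and $\lambda\ge\|F'\|_\infty$, and let $m_1=\min_uM_1'(u)>0$, $m_2=\min_uM_2'(u)>0$ (minima over the range of $u$ under consideration). Suppose $$\Delta t\le\min\Big(\frac{1-\lambda\rho}{1+\gamma_1},\frac{1-\lambda\rho}{1-\gamma_2}\Big),$$ and, if $\lambda>2a$, $$\Delta x\le\frac{a^2}{\lambda+a},\qquad \rho\le\min\Big(\frac1\lambda,\ \frac{2\lambda^2m_1}{2a^2\lambda m_1+a_+a_-^2},\ \frac{2\lambda^2m_2}{2a^2\lambda m_2+a_+^2a_-}\Big),$$ while if $a<\lambda<2a$, the same conditions together with $\rho\ge\frac{|\lambda-2a|}{a^2-\Delta x\,a_-}$. Then the scheme satisfies the monotonicity conditions: for $i=1,2$ and all $u$ in the range under consideration, $(\mathcal{B}^i_l)'(u)\ge0$ for $l=-1,0,1$; $1-\rho q+\Delta t\big((\mathcal{B}^i_0)'(u)-\beta^i_0\big)\ge0$; $\frac{\rho(\lambda_i+q)}{2}+\Delta t\big((\mathcal{B}^i_{-1})'(u)-\beta^i_{-1}\big)\ge0$; $\frac{\rho(q-\lambda_i)}{2}+\Delta t\big((\mathcal{B}^i_1)'(u)-\beta^i_1\big)\ge0$.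
   Context: Jin–Xin system: $\partial_tf^i+\lambda_i\partial_xf^i=M_i(u)-f^i$, $i=1,2$, scalar unknowns ($k=1$), $\lambda_1=-\lambda$, $\lambda_2=\lambda$, $\lambda>0$, $u=f^1+f^2$, with $F(u)=\lambda(M_2(u)-M_1(u))$ smooth, $F(0)=0$, $M_1+M_2=\mathrm{id}$; equivalently $u_t+v_x=0$, $v_t+\lambda^2u_x=F(u)-v$ with $v=\lambda(f^2-f^1)$. Set $a=F'(0)$, $a_\pm=\lambda\pm a$, $\rho=\Delta t/\Delta x$, $q=\lambda$. The $2\times2$ TAHO scheme is $$\frac{f^i_{j,n+1}-f^i_{j,n}}{\Delta t}+\frac{\lambda_i}{2\Delta x}(f^i_{j+1,n}-f^i_{j-1,n})-\frac{q}{2\Delta x}(f^i_{j+1,n}-2f^i_{j,n}+f^i_{j-1,n})=\sum_{l=-1,0,1}\big(\mathcal{B}^i_l(u_{j+l,n})-\beta^i_lf^i_{j+l,n}\big),$$ with scalar $\beta^i_l$ and functions $\mathcal{B}^i_l$ determined by: $\beta^i_{-1}+\beta^i_0+\beta^i_1=1-\frac{\rho}{2}\Delta x$; $\mathcal{B}^i_{-1}+\mathcal{B}^i_0+\mathcal{B}^i_1=M_i(u)(1-\frac{\rho}{2}\Delta x)$; $\beta^i_1-\beta^i_{-1}=\gamma_i$ and $\mathcal{B}^i_1-\mathcal{B}^i_{-1}=\Gamma_i$, where $\gamma_1=\frac{q}{2a_+}+\frac{a\rho}{2a_+}(2\lambda+a)$, $\gamma_2=-\frac{q}{2a_-}+\frac{a\rho}{2a_-}(2\lambda-a)$,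 $\Gamma_1(u)=\frac{q-a^2\rho}{2a_+}M_1(u)-\frac{a_-^2}{4\lambda}\rho u$, $\Gamma_2(u)=-\frac{q-a^2\rho}{2a_-}M_2(u)+\frac{a_+^2}{4\lambda}\rho u$; and finally $\beta^1_0=1-\gamma_1-\frac{\rho}{2}\Delta x$, $\beta^2_0=1+\gamma_2-\frac{\rho}{2}\Delta x$, and $\mathcal{B}^i_0$ is chosen with $(\mathcal{B}^i_0)'(u)=M_i'(u)-|\Gamma_i'(u)|-\frac{\rho}{2}\Delta x\,M_i'(u)$ for $i=1,2$. *)

theory Defs
  imports "HOL-Analysis.Analysis"
begin

text \<open>2x2 TAHO scheme for the Jin--Xin system, with q = lambda.
  Parameters: lam = lambda, a = F'(0), rho = dt/dx. Index i ranges over {1,2}.\<close>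

definition taho_lam :: "real \<Rightarrow> nat \<Rightarrow> real" where
  "taho_lam lam i = (if i = 1 then - lam else lam)"

definition taho_gamma :: "real \<Rightarrow> real \<Rightarrow> real \<Rightarrow> nat \<Rightarrow> real" where
  "taho_gamma lam a rho i =
     (if i = 1 then lam / (2 * (lam + a)) + a * rho / (2 * (lam + a)) * (2 * lam + a)
      else - lam / (2 * (lam - a)) + a * rho / (2 * (lam - a)) * (2 * lam - a))"

definition taho_Gamma :: "real \<Rightarrow> real \<Rightarrow> real \<Rightarrow> (nat \<Rightarrow> real \<Rightarrow> real) \<Rightarrow> nat \<Rightarrow> real \<Rightarrow> real" where
  "taho_Gamma lam a rho M i u =
     (if i = 1 then (lam - a^2 * rho) / (2 * (lam + a)) * M 1 u - (lam - a)^2 / (4 * lam) * rho * u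
      else - (lam - a^2 * rho) / (2 * (lam - a)) * M 2 u + (lam + a)^2 / (4 * lam) * rho * u)"

end

theory Submission
  imports Defs
begin

lemma num1:
  fixes lam a rho m d c :: real
  assumes "0 < rho" "rho * lam \<le> 1" "0 < a" "a < lam" "0 < m" "m \<le> d"
    "rho * (2*a^2*lam*m + (lam+a)*(lam-a)^2) \<le> 2*lam^2*m" "0 \<le> c" "c \<le> 1/2"
  shows "\<bar>(lam - a^2*rho)/(2*(lam+a)) * d - (lam-a)^2/(4*lam)*rho\<bar> \<le> (1-c)*d"
proof -
  define al where "al = (lam - a^2*rho)/(2*(lam+a))"
  define be where "be = (lam-a)^2/(4*lam)*rho"
  have "a^2*rho < lam"
  proof -
    have "a^2*rho < lam^2*rho" using assms by (intro mult_strict_right_mono) (auto intro: power_strict_mono)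
    also have "\<dots> = lam*(rho*lam)" by (simp add: power2_eq_square)
    also have "\<dots> \<le> lam" using assms by (simp add: mult_left_le)
    finally show ?thesis .
  qed
  hence al0: "al \<ge> 0" using assms unfolding al_def by (intro divide_nonneg_pos) auto
  have al1: "al \<le> 1/2"
  proof -
    have "0 \<le> a^2*rho" using assms by simp
    hence "lam - a^2*rho \<le> lam + a" using assms by linarith
    hence "al \<le> (lam + a)/(2*(lam+a))" unfolding al_def using assms by (intro divide_right_mono) auto
    also have "\<dots> = 1/2" using assms by simp
    finally show ?thesis .
  qed
  have ne: "lam \<noteq> 0" "lam + a \<noteq> 0" using assms(3,4) by auto
  have e1: "4*lam*(lam+a)*al = 2*lam*(lam - a^2*rho)" unfolding al_def using ne by (simp add: field_simps)
  have e2: "4*lam*(lam+a)*be = (lam+a)*(lam-a)^2*rho" unfolding be_def using ne by (simp add: field_simps)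
  have "4*lam*(lam+a)*(al*m - be) = (4*lam*(lam+a)*al)*m - 4*lam*(lam+a)*be" by (simp add: algebra_simps)
  also have "\<dots> = 2*lam^2*m - rho * (2*a^2*lam*m + (lam+a)*(lam-a)^2)" unfolding e1 e2 by (simp add: algebra_simps power2_eq_square)
  also have "\<dots> \<ge> 0" using assms by simp
  finally have "4*lam*(lam+a)*(al*m - be) \<ge> 0" .
  moreover have "4*lam*(lam+a) > 0" using assms by simp
  ultimately have "al*m - be \<ge> 0" by (simp add: zero_le_mult_iff)
  hence bm: "be \<le> al*m" by simp
  have d0: "d > 0" using assms by simp
  have be0: "be \<ge> 0" unfolding be_def using assms by simp
  have "al*d \<le> (1-c)*d" using al1 assms d0 by (intro mult_right_mono) auto
  hence "al*d - be \<le> (1-c)*d" using be0 by linarith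
  moreover have "al*m \<le> al*d" using al0 assms by (intro mult_left_mono) auto
  moreover have "(1-c)*d \<ge> 0" using assms d0 by simp
  ultimately have "be - al*d \<le> (1-c)*d" "al*d - be \<le> (1-c)*d" using bm by linarith+
  thus ?thesis unfolding al_def be_def by linarith
qed

lemma num2:
  fixes lam a rho m d c dx :: real
  assumes "0 < rho" "rho * lam \<le> 1" "0 < a" "a < lam" "0 < m" "m \<le> d"
    "rho * (2*a^2*lam*m + (lam+a)^2*(lam-a)) \<le> 2*lam^2*m" "0 \<le> c" "c \<le> 1"
    "2*a - lam - a^2*rho + 2*c*(lam-a) \<le> 0"
  shows "\<bar>-(lam - a^2*rho)/(2*(lam-a)) * d + (lam+a)^2/(4*lam)*rho\<bar> \<le> (1-c)*d"
proof -
  define al where "al = (lam - a^2*rho)/(2*(lam-a))"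
  define be where "be = (lam+a)^2/(4*lam)*rho"
  have "a^2*rho < lam"
  proof -
    have "a^2*rho < lam^2*rho" using assms by (intro mult_strict_right_mono) (auto intro: power_strict_mono)
    also have "\<dots> = lam*(rho*lam)" by (simp add: power2_eq_square)
    also have "\<dots> \<le> lam" using assms by (simp add: mult_left_le)
    finally show ?thesis .
  qed
  hence al0: "al \<ge> 0" using assms unfolding al_def by (intro divide_nonneg_pos) auto
  have al1: "al - 1 + c \<le> 0"
  proof -
    have "al - 1 + c = (2*a - lam - a^2*rho + 2*c*(lam-a)) / (2*(lam-a))"
      unfolding al_def using assms by (simp add: field_simps)
    also have "\<dots> \<le> 0" using assms by (intro divide_nonpos_pos) auto
    finally show ?thesis .
  qed
  have ne: "lam \<noteq> 0" "lam - a \<noteq> 0" using assms(3,4) by auto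
  have e1: "4*lam*(lam-a)*al = 2*lam*(lam - a^2*rho)" unfolding al_def using ne by (simp add: field_simps)
  have e2: "4*lam*(lam-a)*be = (lam+a)^2*(lam-a)*rho" unfolding be_def using ne by (simp add: field_simps)
  have "4*lam*(lam-a)*(al*m - be) = (4*lam*(lam-a)*al)*m - 4*lam*(lam-a)*be" by (simp add: algebra_simps)
  also have "\<dots> = 2*lam^2*m - rho * (2*a^2*lam*m + (lam+a)^2*(lam-a))" unfolding e1 e2 by (simp add: algebra_simps power2_eq_square)
  also have "\<dots> \<ge> 0" using assms by simp
  finally have "4*lam*(lam-a)*(al*m - be) \<ge> 0" .
  moreover have "4*lam*(lam-a) > 0" using assms by simp
  ultimately have "al*m - be \<ge> 0" by (simp add: zero_le_mult_iff)
  hence bm: "be \<le> al*m" by simp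
  have d0: "d > 0" using assms by simp
  have be0: "be \<ge> 0" unfolding be_def using assms by simp
  have "(al - 1 + c)*d \<le> 0" using al1 d0 by (simp add: mult_nonpos_nonneg)
  hence "-al*d + be \<ge> -((1-c)*d)" using be0 by (simp add: algebra_simps)
  moreover have "al*d - be \<ge> - ((1-c)*d)"
  proof -
    have "al*m \<le> al*d" using al0 assms by (intro mult_left_mono) auto
    moreover have "(1-c)*d \<ge> 0" using assms d0 by simp
    ultimately show ?thesis using bm by linarith
  qed
  ultimately have "\<bar>-al*d + be\<bar> \<le> (1-c)*d" by linarith
  moreover have "-(lam - a^2*rho)/(2*(lam-a)) = -al" unfolding al_def by (metis minus_divide_left)
  ultimately show ?thesis unfolding be_def by simp
qed

theorem proposition4p1:
  fixes lam a dt dx rho m1 m2 :: real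
    and F :: "real \<Rightarrow> real"
    and M :: "nat \<Rightarrow> real \<Rightarrow> real"
    and B :: "nat \<Rightarrow> int \<Rightarrow> real \<Rightarrow> real"
    and beta :: "nat \<Rightarrow> int \<Rightarrow> real"
    and U :: "real set"
  assumes lam_pos: "lam > 0"
    and M_diff: "\<And>i u. i \<in> {1, 2} \<Longrightarrow> M i differentiable (at u)"
    and M_sum: "\<And>u. M 1 u + M 2 u = u"
    and F_def: "\<And>u. F u = lam * (M 2 u - M 1 u)"
    and F0: "F 0 = 0"
    and a_def: "(F has_real_derivative a) (at 0)"
    and a_pos: "a > 0"
    and lam_sup: "\<And>u. \<bar>deriv F u\<bar> \<le> lam"
    and m1_min: "m1 \<in> (\<lambda>u. deriv (M 1) u) ` U" "\<And>u. u \<in> U \<Longrightarrow> m1 \<le> deriv (M 1) u"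
    and m2_min: "m2 \<in> (\<lambda>u. deriv (M 2) u) ` U" "\<And>u. u \<in> U \<Longrightarrow> m2 \<le> deriv (M 2) u"
    and m_pos: "m1 > 0" "m2 > 0"
    and dt_pos: "dt > 0" and dx_pos: "dx > 0"
    and rho_def: "rho = dt / dx"
    and beta_sum: "\<And>i. i \<in> {1, 2} \<Longrightarrow> beta i (-1) + beta i 0 + beta i 1 = 1 - rho / 2 * dx"
    and B_sum: "\<And>i u. i \<in> {1, 2} \<Longrightarrow>
        B i (-1) u + B i 0 u + B i 1 u = M i u * (1 - rho / 2 * dx)"
    and beta_diff: "\<And>i. i \<in> {1, 2} \<Longrightarrow> beta i 1 - beta i (-1) = taho_gamma lam a rho i"
    and B_diff: "\<And>i u. i \<in> {1, 2} \<Longrightarrow> B i 1 u - B i (-1) u = taho_Gamma lam a rho M i u"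
    and beta10: "beta 1 0 = 1 - taho_gamma lam a rho 1 - rho / 2 * dx"
    and beta20: "beta 2 0 = 1 + taho_gamma lam a rho 2 - rho / 2 * dx"
    and B0_deriv: "\<And>i u. i \<in> {1, 2} \<Longrightarrow>
        (B i 0 has_real_derivative
           (deriv (M i) u - \<bar>deriv (taho_Gamma lam a rho M i) u\<bar> - rho / 2 * dx * deriv (M i) u)) (at u)"
    and dt_le: "dt \<le> min ((1 - lam * rho) / (1 + taho_gamma lam a rho 1))
                          ((1 - lam * rho) / (1 - taho_gamma lam a rho 2))"
    and regime:
      "(lam > 2 * a \<and>
          dx \<le> a^2 / (lam + a) \<and>
          rho \<le> min (1 / lam)
                 (min (2 * lam^2 * m1 / (2 * a^2 * lam * m1 + (lam + a) * (lam - a)^2))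
                      (2 * lam^2 * m2 / (2 * a^2 * lam * m2 + (lam + a)^2 * (lam - a)))))
       \<or> (a < lam \<and> lam < 2 * a \<and>
          dx \<le> a^2 / (lam + a) \<and>
          rho \<le> min (1 / lam)
                 (min (2 * lam^2 * m1 / (2 * a^2 * lam * m1 + (lam + a) * (lam - a)^2))
                      (2 * lam^2 * m2 / (2 * a^2 * lam * m2 + (lam + a)^2 * (lam - a)))) \<and>
          rho \<ge> \<bar>lam - 2 * a\<bar> / (a^2 - dx * (lam - a)))"
  shows "\<forall>i \<in> {1, 2}. \<forall>u \<in> U.
           (\<forall>l \<in> {-1, 0, 1}. deriv (B i l) u \<ge> 0) \<and>
           1 - rho * lam + dt * (deriv (B i 0) u - beta i 0) \<ge> 0 \<and>
           rho * (taho_lam lam i + lam) / 2 + dt * (deriv (B i (-1)) u - beta i (-1)) \<ge> 0 \<and>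
           rho * (lam - taho_lam lam i) / 2 + dt * (deriv (B i 1) u - beta i 1) \<ge> 0"
proof -
  have rho0: "rho > 0" using rho_def dt_pos dx_pos by simp
  have dtr: "dt = rho * dx" using rho_def dx_pos by simp
  have cm: "a < lam" "dx \<le> a^2/(lam+a)" "rho \<le> 1/lam"
    "rho \<le> 2 * lam^2 * m1 / (2 * a^2 * lam * m1 + (lam + a) * (lam - a)^2)"
    "rho \<le> 2 * lam^2 * m2 / (2 * a^2 * lam * m2 + (lam + a)^2 * (lam - a))"
    using regime a_pos by auto
  have rl: "rho * lam \<le> 1" using cm(3) lam_pos by (simp add: field_simps)
  have D1: "2 * a^2 * lam * m1 + (lam + a) * (lam - a)^2 > 0" using cm(1) a_pos lam_pos m_pos
    by (intro add_pos_pos mult_pos_pos) auto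
  have D2: "2 * a^2 * lam * m2 + (lam + a)^2 * (lam - a) > 0" using cm(1) a_pos lam_pos m_pos
    by (intro add_pos_pos mult_pos_pos) auto
  have R1: "rho * (2 * a^2 * lam * m1 + (lam + a) * (lam - a)^2) \<le> 2 * lam^2 * m1"
    using cm(4) D1 by (simp add: pos_le_divide_eq)
  have R2: "rho * (2 * a^2 * lam * m2 + (lam + a)^2 * (lam - a)) \<le> 2 * lam^2 * m2"
    using cm(5) D2 by (simp add: pos_le_divide_eq)
  have dxa: "dx * (lam + a) \<le> a^2" using cm(2) cm(1) a_pos by (simp add: pos_le_divide_eq)
  have dxa2: "dx \<le> a"
  proof -
    have "a * a \<le> a * (lam + a)" using cm(1) a_pos by (intro mult_left_mono) auto
    hence "dx * (lam + a) \<le> a * (lam + a)" using dxa by (simp add: power2_eq_square)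
    thus ?thesis using cm(1) a_pos by (simp add: mult_le_cancel_right)
  qed
  have HX: "2*a - lam - a^2*rho + rho*dx*(lam-a) \<le> 0 \<and> dx \<le> lam - a"
  proof (cases "lam > 2 * a")
    case True
    hence r: "lam > 2 * a" .
    have "rho*dx*(lam-a) \<le> rho*a^2"
    proof -
      have "dx*(lam-a) \<le> dx*(lam+a)" using dx_pos a_pos by simp
      also have "\<dots> \<le> a^2" using dxa by (simp add: mult.commute)
      finally show ?thesis using rho0 by (simp add: mult.assoc)
    qed
    moreover have "dx \<le> lam - a" using dxa2 r by simp
    moreover have "a^2*rho = rho*a^2" by simp
    ultimately show ?thesis using r by linarith
  next
    case False
    hence r: "a < lam \<and> lam < 2 * a \<and>
          rho \<ge> \<bar>lam - 2 * a\<bar> / (a^2 - dx * (lam - a))" using regime by auto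
    have "dx * (lam - a) < a^2"
    proof -
      have "dx*(lam-a) < dx*(lam+a)" using dx_pos a_pos by simp
      also have "\<dots> \<le> a^2" using dxa by (simp add: mult.commute)
      finally show ?thesis .
    qed
    hence "rho * (a^2 - dx * (lam - a)) \<ge> 2 * a - lam" using r by (simp add: pos_divide_le_eq abs_if split: if_splits)
    moreover have "rho * (a^2 - dx*(lam-a)) = a^2*rho - rho*dx*(lam-a)" by (simp add: algebra_simps)
    ultimately have H: "2*a - lam - a^2*rho + rho*dx*(lam-a) \<le> 0" by linarith
    have "(1 - rho*lam)*(lam - 2*a) \<le> 0" using rl r by (intro mult_nonneg_nonpos) auto
    hence "lam - 2*a \<le> (rho*lam)*(lam - 2*a)" by (simp add: algebra_simps)
    hence "rho*(dx*(lam-a)) \<le> rho*((lam-a)*(lam-a))" using H by (simp add: algebra_simps power2_eq_square)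
    hence "dx*(lam-a) \<le> (lam-a)*(lam-a)" using rho0 by simp
    hence "dx \<le> lam - a" using r by simp
    thus ?thesis using H by simp
  qed
  define g1 where "g1 = taho_gamma lam a rho 1"
  define g2 where "g2 = taho_gamma lam a rho 2"
  have g1eq: "g1 = lam/(2*(lam+a)) + a*rho/(2*(lam+a))*(2*lam+a)" unfolding g1_def taho_gamma_def by simp
  have g1pos: "g1 > 0" unfolding g1eq using lam_pos a_pos rho0
    by (intro add_pos_nonneg) (auto intro!: divide_nonneg_pos mult_nonneg_nonneg)
  have g2neg: "g2 \<le> - lam / (2 * (lam - a)) + a * rho * (2*lam-a) / (2 * (lam - a))"
    "g2 \<le> 0"
  proof -
    have "a * rho * (2*lam-a) * lam = a*(2*lam-a)*(rho*lam)" by (simp add: algebra_simps)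
    also have "\<dots> \<le> a*(2*lam-a)" using rl a_pos cm(1) by (simp add: mult_left_le)
    also have "\<dots> \<le> lam*lam"
    proof -
      have "lam*lam - a*(2*lam-a) = (lam-a)^2" by (simp add: power2_eq_square algebra_simps)
      moreover have "(lam-a)^2 \<ge> 0" by simp
      ultimately show ?thesis by linarith
    qed
    finally have "a * rho * (2*lam-a) \<le> lam" using lam_pos by simp
    hence "- lam / (2 * (lam - a)) + a * rho * (2*lam-a) / (2 * (lam - a)) \<le> 0"
      using cm(1) by (simp add: divide_simps)
    thus "g2 \<le> - lam / (2 * (lam - a)) + a * rho * (2*lam-a) / (2 * (lam - a))" "g2 \<le> 0"
      unfolding g2_def taho_gamma_def by simp_all
  qed
  have g2low: "dx * g2 \<ge> - lam/2"
  proof -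
    have "g2 = - lam / (2 * (lam - a)) + a * rho * (2*lam-a) / (2 * (lam - a))"
      unfolding g2_def taho_gamma_def by simp
    also have "\<dots> \<ge> - lam / (2 * (lam - a))" using cm(1) a_pos rho0 by simp
    finally have "g2 \<ge> - lam / (2 * (lam - a))" .
    hence "dx * g2 \<ge> dx * (- lam / (2 * (lam - a)))" using dx_pos by (intro mult_left_mono) auto
    moreover have "dx * (- lam / (2 * (lam - a))) \<ge> - lam/2"
      using HX cm(1) lam_pos dx_pos by (simp add: divide_simps)
    ultimately show ?thesis by simp
  qed
  have g1up: "dx * g1 \<le> lam"
  proof -
    have "a*rho \<le> lam*rho" using cm(1) rho0 by (intro mult_right_mono) auto
    hence ar: "a*rho \<le> 1" using rl by (simp add: mult.commute)
    have "dx * (a*rho*(2*lam+a)) \<le> dx * (2*lam+a)" using ar dx_pos cm(1) a_pos by (simp add: mult_left_le)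
    also have "\<dots> \<le> a * (2*lam+a)" using dxa2 cm(1) a_pos by (intro mult_right_mono) auto
    also have "\<dots> \<le> lam*lam + 2*lam*a" using cm(1) a_pos
    proof -
      have "a*a \<le> lam*lam" using cm(1) a_pos by (intro mult_mono) auto
      thus ?thesis by (simp add: algebra_simps)
    qed
    finally have X: "dx * (a*rho*(2*lam+a)) \<le> lam * lam + 2*lam*a" .
    have "dx * lam \<le> lam * lam" using dxa2 cm(1) lam_pos by (intro mult_right_mono) auto
    hence "dx * (lam + a*rho*(2*lam+a)) \<le> 2*lam*(lam+a)"
      using X by (simp add: distrib_left distrib_right)
    hence "dx * ((lam + a*rho*(2*lam+a)) / (2*(lam+a))) \<le> lam" using cm(1) a_pos
      by (simp add: divide_simps mult.commute mult.left_commute)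
    thus ?thesis unfolding g1_def taho_gamma_def by (simp add: add_divide_distrib)
  qed
  have dt1: "dt * (1 + g1) \<le> 1 - lam * rho" using dt_le g1pos unfolding g1_def
    by (simp add: pos_le_divide_eq)
  have dt2: "dt * (1 - g2) \<le> 1 - lam * rho" using dt_le g2neg(2) unfolding g2_def
    by (simp add: pos_le_divide_eq)
  define c where "c = rho / 2 * dx"
  have c0: "c \<ge> 0" "c \<le> 1/2"
  proof -
    show "c \<ge> 0" unfolding c_def using rho0 dx_pos by simp
    have "dt \<le> dt * (1 + g1)" using g1pos dt_pos by simp
    moreover have "0 \<le> lam * rho" using rho0 lam_pos by simp
    ultimately have "dt \<le> 1" using dt1 by linarith
    thus "c \<le> 1/2" using c_def dtr by simp
  qed
  show ?thesis
  proof (intro ballI)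
    fix i u assume i: "i \<in> {1, 2::nat}" and uU: "u \<in> U"
    have dM: "\<And>v. (M i has_real_derivative deriv (M i) v) (at v)"
      using M_diff[OF i] DERIV_deriv_iff_real_differentiable by blast
    define G where "G = taho_Gamma lam a rho M i"
    define K1 where "K1 = (if i = 1 then (lam - a^2 * rho) / (2 * (lam + a)) else - (lam - a^2 * rho) / (2 * (lam - a)))"
    define K2 where "K2 = (if i = 1 then - ((lam - a)^2 / (4 * lam) * rho) else (lam + a)^2 / (4 * lam) * rho)"
    have Geq: "G = (\<lambda>v. K1 * M i v + K2 * v)"
      using i by (auto simp: G_def K1_def K2_def taho_Gamma_def fun_eq_iff)
    have dG: "\<And>v. (G has_real_derivative K1 * deriv (M i) v + K2) (at v)"
      unfolding Geq by (auto intro!: derivative_eq_intros dM)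
    define g where "g = K1 * deriv (M i) u + K2"
    have dGu: "deriv G u = g" using dG DERIV_imp_deriv g_def by blast
    define b0 where "b0 = deriv (M i) u - \<bar>g\<bar> - c * deriv (M i) u"
    have dB0: "(B i 0 has_real_derivative b0) (at u)"
      using B0_deriv[OF i, of u] dGu unfolding b0_def G_def c_def by simp
    have Bm: "B i (-1) = (\<lambda>v. (M i v * (1-c) - B i 0 v - G v)/2)"
    proof (rule ext)
      fix v
      have "B i (-1) v + B i 0 v + B i 1 v = M i v * (1-c)" using B_sum[OF i] unfolding c_def .
      moreover have "B i 1 v - B i (-1) v = G v" using B_diff[OF i] unfolding G_def .
      moreover obtain X where X: "X = M i v * (1-c)" by simp
      ultimately have "B i (-1) v = (X - B i 0 v - G v)/2" by (simp add: field_simps)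
      thus "B i (-1) v = (M i v * (1-c) - B i 0 v - G v)/2" using X by simp
    qed
    have Bp: "B i 1 = (\<lambda>v. (M i v * (1-c) - B i 0 v + G v)/2)"
    proof (rule ext)
      fix v
      have "B i (-1) v + B i 0 v + B i 1 v = M i v * (1-c)" using B_sum[OF i] unfolding c_def .
      moreover have "B i 1 v - B i (-1) v = G v" using B_diff[OF i] unfolding G_def .
      moreover obtain X where X: "X = M i v * (1-c)" by simp
      ultimately have "B i 1 v = (X - B i 0 v + G v)/2" by (simp add: field_simps)
      thus "B i 1 v = (M i v * (1-c) - B i 0 v + G v)/2" using X by simp
    qed
    have "(B i (-1) has_real_derivative (deriv (M i) u * (1-c) - b0 - g)/2) (at u)"
      unfolding Bm by (auto intro!: derivative_eq_intros dM dB0 dG simp: g_def)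
    hence dBm: "deriv (B i (-1)) u = (\<bar>g\<bar> - g)/2"
      using DERIV_imp_deriv unfolding b0_def by (fastforce simp: algebra_simps)
    have "(B i 1 has_real_derivative (deriv (M i) u * (1-c) - b0 + g)/2) (at u)"
      unfolding Bp by (auto intro!: derivative_eq_intros dM dB0 dG simp: g_def)
    hence dBp: "deriv (B i 1) u = (\<bar>g\<bar> + g)/2"
      using DERIV_imp_deriv unfolding b0_def by (fastforce simp: algebra_simps)
    have dB0u: "deriv (B i 0) u = b0" using dB0 DERIV_imp_deriv by blast
    have b0nn: "b0 \<ge> 0"
    proof (cases "i = 1")
      case True
      have "m1 \<le> deriv (M 1) u" using m1_min(2) uU .
      from num1[OF rho0 rl a_pos cm(1) m_pos(1) this R1 c0]
      show ?thesis using True unfolding b0_def g_def K1_def K2_def by (simp add: algebra_simps)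
    next
      case False
      hence i2: "i = 2" using i by simp
      have "m2 \<le> deriv (M 2) u" using m2_min(2) uU .
      moreover have "2*a - lam - a^2*rho + 2*c*(lam-a) \<le> 0" using HX unfolding c_def by (simp add: mult.assoc)
      ultimately have "\<bar>-(lam - a^2*rho)/(2*(lam-a)) * deriv (M 2) u + (lam+a)^2/(4*lam)*rho\<bar>
          \<le> (1-c)* deriv (M 2) u"
        using num2[OF rho0 rl a_pos cm(1) m_pos(2) _ R2 c0(1)] c0(2) by simp
      thus ?thesis using i2 unfolding b0_def g_def K1_def K2_def by (simp add: algebra_simps)
    qed
    have bsum: "beta i (-1) + beta i 0 + beta i 1 = 1 - c" using beta_sum[OF i] c_def by simp
    have bdif: "beta i 1 - beta i (-1) = taho_gamma lam a rho i" using beta_diff[OF i] .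
    have "(\<forall>l \<in> {-1, 0, 1}. deriv (B i l) u \<ge> 0)" using dBm dBp dB0u b0nn by auto
    moreover have "1 - rho * lam + dt * (deriv (B i 0) u - beta i 0) \<ge> 0"
    proof -
      have "dt * (deriv (B i 0) u - beta i 0) \<ge> - dt * beta i 0"
        using dB0u b0nn dt_pos by (simp add: algebra_simps)
      moreover have "dt * beta i 0 \<le> 1 - rho*lam"
      proof (cases "i = 1")
        case True
        have "dt * beta i 0 \<le> dt * (1 + g1)" using True beta10 g1pos c0 dt_pos mult_pos_pos[OF rho0 dx_pos] unfolding g1_def
          by (intro mult_left_mono) auto
        thus ?thesis using dt1 by (simp add: mult.commute)
      next
        case False
        hence "i = 2" using i by simp
        have "dt * beta i 0 \<le> dt * (1 - g2)" using \<open>i = 2\<close> beta20 g2neg c0 dt_pos mult_pos_pos[OF rho0 dx_pos] unfolding g2_def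
          by (intro mult_left_mono) auto
        thus ?thesis using dt2 by (simp add: mult.commute)
      qed
      ultimately show ?thesis by simp
    qed
    moreover have dBm0: "dt * deriv (B i (-1)) u \<ge> 0" unfolding dBm using dt_pos by (intro mult_nonneg_nonneg) auto
    moreover have dBp0: "dt * deriv (B i 1) u \<ge> 0" unfolding dBp using dt_pos by (intro mult_nonneg_nonneg) auto
    moreover have rl0: "rho * lam > 0" using rho0 lam_pos by simp
    moreover have "rho * (taho_lam lam i + lam) / 2 + dt * (deriv (B i (-1)) u - beta i (-1)) \<ge> 0 \<and>
           rho * (lam - taho_lam lam i) / 2 + dt * (deriv (B i 1) u - beta i 1) \<ge> 0"
    proof (cases "i = 1")
      case True
      have bm: "beta i (-1) = 0" and bp: "beta i 1 = g1"
        using bsum bdif beta10 True unfolding g1_def c_def by auto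
      have "dt * (deriv (B i 1) u - g1) = dt * deriv (B i 1) u - rho * (dx * g1)"
        using dtr by (simp add: right_diff_distrib mult.assoc)
      hence "dt * (deriv (B i 1) u - g1) \<ge> - (rho * (dx * g1))" using dBp0 by linarith
      moreover have "rho * (dx * g1) \<le> rho * lam" using g1up rho0 by simp
      moreover have tl: "taho_lam lam i = -lam" using True taho_lam_def by simp
      moreover have "rho*(taho_lam lam i + lam)/2 + dt*(deriv (B i (-1)) u - beta i (-1)) = dt * deriv (B i (-1)) u"
        using tl bm by simp
      moreover have "rho*(lam - taho_lam lam i)/2 + dt*(deriv (B i 1) u - beta i 1) = rho*lam + dt*(deriv (B i 1) u - g1)"
        using tl bp by simp
      ultimately show ?thesis using dBm0 by linarith
    next
      case False
      hence i2: "i = 2" using i by simp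
      have bm: "beta i (-1) = - g2" and bp: "beta i 1 = 0"
        using bsum bdif beta20 i2 unfolding g2_def c_def by auto
      have "dt * (deriv (B i (-1)) u + g2) = dt * deriv (B i (-1)) u + rho * (dx * g2)"
        using dtr by (simp add: distrib_left mult.assoc)
      hence "dt * (deriv (B i (-1)) u + g2) \<ge> rho * (dx * g2)" using dBm0 by linarith
      moreover have "rho * (dx * g2) \<ge> - (rho * lam / 2)"
      proof -
        have "rho * (- lam / 2) \<le> rho * (dx * g2)" using g2low rho0 by (intro mult_left_mono) auto
        thus ?thesis by simp
      qed
      moreover have tl: "taho_lam lam i = lam" using i2 taho_lam_def by simp
      moreover have "rho*(taho_lam lam i + lam)/2 + dt*(deriv (B i (-1)) u - beta i (-1)) = rho*lam + dt*(deriv (B i (-1)) u + g2)"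
        using tl bm by simp
      moreover have "rho*(lam - taho_lam lam i)/2 + dt*(deriv (B i 1) u - beta i 1) = dt * deriv (B i 1) u"
        using tl bp by simp
      ultimately show ?thesis using dBp0 rl0 by linarith
    qed
    ultimately show "(\<forall>l \<in> {-1, 0, 1}. deriv (B i l) u \<ge> 0) \<and>
           1 - rho * lam + dt * (deriv (B i 0) u - beta i 0) \<ge> 0 \<and>
           rho * (taho_lam lam i + lam) / 2 + dt * (deriv (B i (-1)) u - beta i (-1)) \<ge> 0 \<and>
           rho * (lam - taho_lam lam i) / 2 + dt * (deriv (B i 1) u - beta i 1) \<ge> 0" by blast
  qed
qed

end
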